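(* Let $\Psi=(\psi_{ij})$ and $\Phi=(\phi_{ij})$ be orthogonal quantum Latin squares of order $6$ in standard form. If some entry $\psi_{ij}$ has weight $3$, then every entry $\phi_{kj}$, $k=1,\dots,6$, of the $j$-th column of $\Phi$ has weight $1$ or $2$.
   Context: A quantum Latin square (QLS) of order $n$ is an $n\times n$ matrix $\Psi=(\psi_{ij})_{1\le i,j\le n}$ whose entries are unit vectors in $\mathbb C^n$ such that the entries of each row and the entries of each column form an orthonormal basis of $\mathbb C^n$. Two QLS $\Psi=(\psi_{ij})$ and $\Phi=(\phi_{ij})$ of order $n$ are orthogonal if $\{\psi_{ij}\otimes\phi_{ij}: 1\le i,j\le n\}$ is an orthonormal basis of $\mathbb C^n\otimes\mathbb C^n$. Fix the standard orthonormal basis $\ket{1},\dots,\ket{n}$ of $\mathbb C^n$. The support of a vector $v$ is $\{k:\braket{k}{v}\neq 0\}$ and its weight is the size of its support. A pair $\Psi,\Phi$ is in standard form if $\psi_{1j}=\phi_{1j}=\ket{j}$ for all $j=1,\dots,n$. *)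

theory Defs
  imports "HOL-Analysis.Analysis" "HOL-Library.Numeral_Type"
begin

definition cinner :: "complex ^ 'n \<Rightarrow> complex ^ 'n \<Rightarrow> complex" where
  "cinner v w = (\<Sum>k\<in>UNIV. cnj (v $ k) * w $ k)"

definition is_onb :: "(complex ^ 'n) set \<Rightarrow> bool" where
  "is_onb B \<longleftrightarrow> (\<forall>v\<in>B. cinner v v = 1) \<and>
                 (\<forall>v\<in>B. \<forall>w\<in>B. v \<noteq> w \<longrightarrow> cinner v w = 0) \<and>
                 vec.span B = UNIV"

definition ket :: "'n \<Rightarrow> complex ^ 'n" where
  "ket k = axis k 1"

definition tensor :: "complex ^ 'n \<Rightarrow> complex ^ 'n \<Rightarrow> complex ^ ('n \<times> 'n)" where
  "tensor v w = (\<chi> p. v $ fst p * w $ snd p)"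

definition support :: "complex ^ 'n \<Rightarrow> 'n set" where
  "support v = {k. v $ k \<noteq> 0}"

definition weight :: "complex ^ 'n \<Rightarrow> nat" where
  "weight v = card (support v)"

definition is_QLS :: "('n \<Rightarrow> 'n \<Rightarrow> complex ^ 'n) \<Rightarrow> bool" where
  "is_QLS \<Psi> \<longleftrightarrow> (\<forall>i. is_onb {\<Psi> i j | j. True}) \<and> (\<forall>j. is_onb {\<Psi> i j | i. True})"

definition orthogonal_QLS :: "('n \<Rightarrow> 'n \<Rightarrow> complex ^ 'n) \<Rightarrow> ('n \<Rightarrow> 'n \<Rightarrow> complex ^ 'n) \<Rightarrow> bool" where
  "orthogonal_QLS \<Psi> \<Phi> \<longleftrightarrow> is_onb {tensor (\<Psi> i j) (\<Phi> i j) | i j. True}"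

definition standard_form :: "'n \<Rightarrow> ('n \<Rightarrow> 'n \<Rightarrow> complex ^ 'n) \<Rightarrow> ('n \<Rightarrow> 'n \<Rightarrow> complex ^ 'n) \<Rightarrow> bool" where
  "standard_form r1 \<Psi> \<Phi> \<longleftrightarrow> (\<forall>j. \<Psi> r1 j = ket j \<and> \<Phi> r1 j = ket j)"

end

theory Submission imports Defs begin


lemma onb_inj:
  fixes f :: "'a::finite \<Rightarrow> complex^'n"
  assumes "is_onb (range f)" "CARD('a) = CARD('n)"
  shows "inj f"
proof -
  have sp: "vec.span (range f) = UNIV" using assms(1) unfolding is_onb_def by auto
  have "vec.dim (UNIV::(complex^'n) set) = CARD('n)"
    by (simp add: card_cart_basis)
  moreover have "vec.dim (UNIV::(complex^'n) set) \<le> card (range f)"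
    by (rule vec.dim_le_card) (use sp in auto)
  moreover have "card (range f) \<le> CARD('a)" by (rule card_image_le) simp
  ultimately have "card (range f) = card (UNIV::'a set)" using assms(2) by simp
  then show ?thesis by (simp add: eq_card_imp_inj_on)
qed

lemma cinner_sum_right: "cinner w (\<Sum>k\<in>K. g k) = (\<Sum>k\<in>K. cinner w (g k))"
  unfolding cinner_def by (simp add: sum_component sum_distrib_left sum.swap[of _ K])

lemma onb_orth:
  assumes "is_onb (range f)" "inj f"
  shows "cinner (f k) (f k') = (if k = k' then 1 else 0)"
proof (cases "k = k'")
  case True then show ?thesis using assms(1) unfolding is_onb_def by auto
next
  case False then have "f k \<noteq> f k'" using assms(2) by (auto simp: inj_def)
  then show ?thesis using assms(1) False unfolding is_onb_def by auto
qed

lemma cinner_diff_right: "cinner w (x - y) = cinner w x - cinner w y"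
  unfolding cinner_def by (simp add: sum_subtractf right_diff_distrib)

lemma cinner_scale_right: "cinner w (c *s x) = c * cinner w x"
  unfolding cinner_def by (simp add: sum_distrib_left algebra_simps)

lemma cinner_scale_left: "cinner (c *s x) w = cnj c * cinner x w"
  unfolding cinner_def by (simp add: sum_distrib_left algebra_simps)

lemma cinner_sum_left: "cinner (\<Sum>k\<in>K. g k) w = (\<Sum>k\<in>K. cinner (g k) w)"
  unfolding cinner_def by (simp add: sum_component sum_distrib_right sum.swap[of _ K])

lemma cinner_self_zero: "cinner z z = 0 \<Longrightarrow> z = 0"
proof -
  assume zz: "cinner z z = 0"
  have eq: "cnj (z $ k) * z $ k = complex_of_real ((cmod (z $ k))^2)" for k
    by (metis complex_norm_square mult.commute of_real_power)
  have "(\<Sum>k\<in>UNIV. complex_of_real ((cmod (z $ k))^2)) = 0"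
    using zz unfolding cinner_def eq .
  then have "(\<Sum>k\<in>UNIV. (cmod (z $ k))^2) = 0"
    by (metis of_real_eq_0_iff of_real_sum)
  then have "\<forall>k\<in>UNIV. (cmod (z $ k))^2 = 0"
    by (subst (asm) sum_nonneg_eq_0_iff) auto
  then show ?thesis by (simp add: vec_eq_iff)
qed

lemma cinner_axis: "cinner x (axis b 1) = cnj (x $ b)"
  unfolding cinner_def axis_def by (simp add: if_distrib cong: if_cong)

lemma onb_complete:
  fixes f :: "'a::finite \<Rightarrow> complex^'n"
  assumes "is_onb (range f)" "inj f"
  shows "(\<Sum>k\<in>UNIV. cnj (f k $ b) * f k $ a) = (if a = b then 1 else 0)"
proof -
  define z where "z = axis b 1 - (\<Sum>k\<in>UNIV. cinner (f k) (axis b 1) *s f k)"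
  have ci: "cinner (f k') z = 0" for k'
  proof -
    have "cinner (f k') z = cinner (f k') (axis b 1) - (\<Sum>k\<in>UNIV. cinner (f k) (axis b 1) * cinner (f k') (f k))"
      unfolding z_def cinner_diff_right cinner_sum_right cinner_scale_right ..
    also have "(\<Sum>k\<in>UNIV. cinner (f k) (axis b 1) * cinner (f k') (f k)) = (\<Sum>k\<in>UNIV. if k = k' then cinner (f k) (axis b 1) else 0)"
      by (rule sum.cong) (auto simp: onb_orth[OF assms])
    also have "cinner (f k') (axis b 1) - \<dots> = 0" by simp
    finally show ?thesis .
  qed
  have "z \<in> vec.span (range f)" using assms(1) unfolding is_onb_def by auto
  then obtain c where zc: "z = (\<Sum>v\<in>range f. c v *s v)"
    using vec.span_finite[of "range f"] by auto
  have "cinner z z = (\<Sum>v\<in>range f. cnj (c v) * cinner v z)"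
    by (subst (1) zc) (simp add: cinner_sum_left cinner_scale_left)
  also have "\<dots> = 0" using ci by (intro sum.neutral) auto
  finally have "z = 0" by (rule cinner_self_zero)
  then have "z $ a = 0" by simp
  then have "axis b 1 $ a - (\<Sum>k\<in>UNIV. cnj (f k $ b) * f k $ a) = 0"
    unfolding z_def cinner_axis by (simp add: sum_component)
  then show ?thesis by (simp add: axis_def)
qed



lemma card_ge2_iff: "finite X \<Longrightarrow> 2 \<le> card X \<longleftrightarrow> (\<exists>x y. x \<in> X \<and> y \<in> X \<and> x \<noteq> y)"
  by (metis One_nat_def Suc_1 card_le_Suc0_iff_eq not_less_eq_eq)

lemma univ6:
  fixes x1 :: "'n::finite"
  assumes "CARD('n) = 6" "distinct [x1,x2,x3,x4,x5,x6]"
  shows "(UNIV::'n set) = {x1,x2,x3,x4,x5,x6}"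
proof -
  have "card {x1,x2,x3,x4,x5,x6} = 6" using assms(2) by simp
  then have "{x1,x2,x3,x4,x5,x6} = (UNIV::'n set)"
    using assms(1) by (intro card_subset_eq) auto
  then show ?thesis by simp
qed

locale combi =
  fixes U V :: "'n::finite \<Rightarrow> 'n set" and r0 j :: 'n
  assumes card6: "CARD('n) = 6"
  and U0: "U r0 = {j}" and V0: "V r0 = {j}"
  and Uj: "\<And>k. k \<noteq> r0 \<Longrightarrow> j \<notin> U k" and Vj: "\<And>k. k \<noteq> r0 \<Longrightarrow> j \<notin> V k"
  and UV: "\<And>k x. k \<noteq> r0 \<Longrightarrow> x \<in> U k \<Longrightarrow> x \<notin> V k"
  and Une: "\<And>k. U k \<noteq> {}" and Vne: "\<And>k. V k \<noteq> {}"
  and G1U: "\<And>k k' c. k \<noteq> k' \<Longrightarrow> c \<in> U k \<Longrightarrow> c \<in> U k' \<Longrightarrow> \<exists>c'. c' \<noteq> c \<and> c' \<in> U k \<and> c' \<in> U k'"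
  and G1V: "\<And>k k' c. k \<noteq> k' \<Longrightarrow> c \<in> V k \<Longrightarrow> c \<in> V k' \<Longrightarrow> \<exists>c'. c' \<noteq> c \<and> c' \<in> V k \<and> c' \<in> V k'"
  and G2U: "\<And>k1 k2 k3 a b. k1 \<noteq> k2 \<Longrightarrow> k1 \<noteq> k3 \<Longrightarrow> k2 \<noteq> k3 \<Longrightarrow> a \<noteq> b \<Longrightarrow>
     a \<in> U k1 \<Longrightarrow> b \<in> U k1 \<Longrightarrow> a \<in> U k2 \<Longrightarrow> b \<in> U k2 \<Longrightarrow> a \<in> U k3 \<Longrightarrow> b \<in> U k3 \<Longrightarrow>
     U k1 \<inter> U k2 \<subseteq> {a,b} \<Longrightarrow> U k1 \<inter> U k3 \<subseteq> {a,b} \<Longrightarrow> U k2 \<inter> U k3 \<subseteq> {a,b} \<Longrightarrow> False"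
  and G2V: "\<And>k1 k2 k3 a b. k1 \<noteq> k2 \<Longrightarrow> k1 \<noteq> k3 \<Longrightarrow> k2 \<noteq> k3 \<Longrightarrow> a \<noteq> b \<Longrightarrow>
     a \<in> V k1 \<Longrightarrow> b \<in> V k1 \<Longrightarrow> a \<in> V k2 \<Longrightarrow> b \<in> V k2 \<Longrightarrow> a \<in> V k3 \<Longrightarrow> b \<in> V k3 \<Longrightarrow>
     V k1 \<inter> V k2 \<subseteq> {a,b} \<Longrightarrow> V k1 \<inter> V k3 \<subseteq> {a,b} \<Longrightarrow> V k2 \<inter> V k3 \<subseteq> {a,b} \<Longrightarrow> False"
  and G3U: "\<And>i a b c. a \<noteq> b \<Longrightarrow> a \<noteq> c \<Longrightarrow> b \<noteq> c \<Longrightarrow> a \<in> U i \<Longrightarrow> b \<in> U i \<Longrightarrow> c \<in> U i \<Longrightarrow>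
     \<exists>k1 k2. k1 \<noteq> k2 \<and> k1 \<noteq> i \<and> k2 \<noteq> i \<and> U k1 \<inter> U i \<noteq> {} \<and> U k2 \<inter> U i \<noteq> {}"
  and G3V: "\<And>i a b c. a \<noteq> b \<Longrightarrow> a \<noteq> c \<Longrightarrow> b \<noteq> c \<Longrightarrow> a \<in> V i \<Longrightarrow> b \<in> V i \<Longrightarrow> c \<in> V i \<Longrightarrow>
     \<exists>k1 k2. k1 \<noteq> k2 \<and> k1 \<noteq> i \<and> k2 \<noteq> i \<and> V k1 \<inter> V i \<noteq> {} \<and> V k2 \<inter> V i \<noteq> {}"

lemma (in combi) swap: "combi V U r0 j"
  by unfold_locales (fact card6 V0 U0 Vj Uj Vne Une G1V G1U G2V G2U G3V G3U | blast dest: UV)+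

lemma (in combi) L_two:
  assumes "i \<noteq> k1" "i \<noteq> k2" "k1 \<noteq> k2" "U i = {a1,a2,a3}" "distinct [a1,a2,a3]"
    "U k1 = {x1,y1}" "x1 \<noteq> y1" "U k2 = {x2,y2}" "x2 \<noteq> y2"
    "{x1,y1,x2,y2} \<subseteq> U i"
  shows False
proof (cases "{x1,y1} = {x2,y2}")
  case True
  then have "U k2 = {x1,y1}" using assms by simp
  then show False using G2U[of k1 k2 i x1 y1] assms by (simp add: insert_subset)
next
  case False
  have "\<exists>c. c \<in> U k1 \<and> c \<in> U k2"
  proof (rule ccontr)
    assume "\<not> ?thesis"
    then have "x1 \<noteq> x2" "x1 \<noteq> y2" "y1 \<noteq> x2" "y1 \<noteq> y2" using assms by auto
    moreover have "x1 \<in> {a1,a2,a3}" "y1 \<in> {a1,a2,a3}" "x2 \<in> {a1,a2,a3}" "y2 \<in> {a1,a2,a3}" using assms by auto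
    ultimately show False using assms(7,9) by auto
  qed
  then obtain c where c: "c \<in> U k1" "c \<in> U k2" by blast
  then obtain c' where "c' \<noteq> c" "c' \<in> U k1" "c' \<in> U k2" using G1U[of k1 k2 c] assms by blast
  then have "{c,c'} = {x1,y1}" "{c,c'} = {x2,y2}" using c assms by auto
  then show False using False by simp
qed

lemma no7:
  fixes x1 :: "'n::finite"
  assumes "CARD('n) = 6" "distinct [x1,x2,x3,x4,x5,x6,x7]"
  shows False
proof -
  have "card {x1,x2,x3,x4,x5,x6,x7} = 7" using assms(2) by simp
  moreover have "card {x1,x2,x3,x4,x5,x6,x7} \<le> CARD('n)" by (rule card_mono) auto
  ultimately show False using assms(1) by simp
qed

lemma (in combi) C4:
  assumes d: "distinct [j,d,a1,a2,a3,b]" and A: "U i = {a1,a2,a3}" and Um: "U m = {d}"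
    and C: "V m = {a1,a2,a3,b}" and "i \<noteq> m" "i \<noteq> r0" "m \<noteq> r0"
  shows False
proof -
  have UN: "(UNIV::'n set) = {j,d,a1,a2,a3,b}" using univ6[OF card6 d] .
  have jA: "j \<notin> U i" and dA: "d \<notin> U i" using A d by simp_all
  have Vi1: "x \<in> V i \<Longrightarrow> x = d \<or> x = b" for x
  proof -
    assume xv: "x \<in> V i"
    have "x \<in> {j,d,a1,a2,a3,b}" using UN by blast
    moreover have "x \<noteq> j" using Vj[OF assms(6)] xv by auto
    moreover have "x \<notin> U i" using UV[OF assms(6)] xv by auto
    ultimately show ?thesis using A by auto
  qed
  have "b \<notin> V i"
  proof
    assume "b \<in> V i"
    then obtain c' where "c' \<noteq> b" "c' \<in> V i" "c' \<in> V m" using G1V[of i m b] C assms(5) by auto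
    then have "c' = d" using Vi1 by blast
    then have "d \<in> {a1,a2,a3,b}" using C \<open>c' \<in> V m\<close> by simp
    then show False using d by simp
  qed
  then have Vi: "V i = {d}" using Vi1 Vne[of i] by blast
  have dV: "d \<notin> V k" if ki: "k \<noteq> i" for k
  proof
    assume "d \<in> V k"
    then obtain c' where "c' \<noteq> d" "c' \<in> V k" "c' \<in> V i" using G1V[of k i d] Vi ki by auto
    then show False using Vi by auto
  qed
  have dU: "d \<notin> U k" if km: "k \<noteq> m" for k
  proof
    assume "d \<in> U k"
    then obtain c' where "c' \<noteq> d" "c' \<in> U k" "c' \<in> U m" using G1U[of k m d] Um km by auto
    then show False using Um by auto
  qed
  have P: "\<exists>x y. U k = {x,y} \<and> x \<noteq> y \<and> {x,y} \<subseteq> U i" if k: "k \<noteq> i" "U k \<inter> U i \<noteq> {}" for k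
  proof -
    have kr: "k \<noteq> r0" using k U0 jA by auto
    have km: "k \<noteq> m" using k Um dA by auto
    obtain x where x: "x \<in> U k" "x \<in> U i" using k by auto
    obtain x' where x': "x' \<noteq> x" "x' \<in> U k" "x' \<in> U i" using G1U[of k i x] x k by auto
    obtain y where y: "y \<in> V k" using Vne[of k] by auto
    have "y \<in> V m" using y UN Vj[OF kr] dV[OF k(1)] C by auto
    then obtain y' where y': "y' \<noteq> y" "y' \<in> V k" "y' \<in> V m" using G1V[of k m y] y km by auto
    have sub: "U k \<subseteq> {x,x'}"
    proof
      fix z assume z: "z \<in> U k"
      have "z \<noteq> j" "z \<noteq> d" using z Uj[OF kr] dU[OF km] by auto
      moreover have "z \<noteq> y" "z \<noteq> y'" "x \<noteq> y" "x \<noteq> y'" "x' \<noteq> y" "x' \<noteq> y'"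
        using z x x' y y' UV[OF kr] by blast+
      moreover have "x \<in> {a1,a2,a3,b}" "x' \<in> {a1,a2,a3,b}" "y \<in> {a1,a2,a3,b}" "y' \<in> {a1,a2,a3,b}"
        using x x' y' \<open>y \<in> V m\<close> A C by auto
      ultimately have "card {x,x',y,y'} = 4" "{x,x',y,y'} \<subseteq> {a1,a2,a3,b}" using x'(1) y'(1) by auto
      moreover have "card {a1,a2,a3,b} = 4" using d by auto
      ultimately have "{x,x',y,y'} = {a1,a2,a3,b}" by (intro card_subset_eq) auto
      moreover have "z \<in> {a1,a2,a3,b}" using UN \<open>z \<noteq> j\<close> \<open>z \<noteq> d\<close> by blast
      ultimately show "z \<in> {x,x'}" using \<open>z \<noteq> y\<close> \<open>z \<noteq> y'\<close> by blast
    qed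
    then have "U k = {x,x'}" using x x' by auto
    then show ?thesis using x x' by auto
  qed
  obtain k1 k2 where k: "k1 \<noteq> k2" "k1 \<noteq> i" "k2 \<noteq> i" "U k1 \<inter> U i \<noteq> {}" "U k2 \<inter> U i \<noteq> {}"
    using G3U[of a1 a2 a3 i] A d by auto
  obtain x1 y1 where 1: "U k1 = {x1,y1}" "x1 \<noteq> y1" "{x1,y1} \<subseteq> U i" using P k by blast
  obtain x2 y2 where 2: "U k2 = {x2,y2}" "x2 \<noteq> y2" "{x2,y2} \<subseteq> U i" using P k by blast
  show False by (rule L_two[of i k1 k2 a1 a2 a3 x1 y1 x2 y2]) (use k 1 2 A d in auto)
qed

lemma (in combi) twoU: "k \<noteq> k' \<Longrightarrow> U k \<inter> U k' \<noteq> {} \<Longrightarrow> \<exists>x x'. x \<noteq> x' \<and> x \<in> U k \<and> x \<in> U k' \<and> x' \<in> U k \<and> x' \<in> U k'"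
  using G1U by blast

lemma (in combi) twoV: "k \<noteq> k' \<Longrightarrow> V k \<inter> V k' \<noteq> {} \<Longrightarrow> \<exists>x x'. x \<noteq> x' \<and> x \<in> V k \<and> x \<in> V k' \<and> x' \<in> V k \<and> x' \<in> V k'"
  using G1V by blast

lemma (in combi) C33:
  assumes d: "distinct [a1,a2,a3]" and A: "U i = {a1,a2,a3}" and C: "V m = {a1,a2,a3}"
    and im: "i \<noteq> m" and ir: "i \<noteq> r0" and mr: "m \<noteq> r0"
  shows False
proof -
  obtain k1 k2 where k12: "k1 \<noteq> k2" "k1 \<noteq> i" "k2 \<noteq> i" "U k1 \<inter> U i \<noteq> {}" "U k2 \<inter> U i \<noteq> {}"
    using G3U[of a1 a2 a3 i] A d by auto
  obtain k3 k4 where k34: "k3 \<noteq> k4" "k3 \<noteq> m" "k4 \<noteq> m" "V k3 \<inter> V m \<noteq> {}" "V k4 \<inter> V m \<noteq> {}"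
    using G3V[of a1 a2 a3 m] C d by auto
  have jA: "j \<notin> U i" using Uj ir by auto
  have jC: "j \<notin> V m" using Vj mr by auto
  have nb: False if k: "U k \<inter> U i \<noteq> {}" "V k \<inter> V m \<noteq> {}" "k \<noteq> i" "k \<noteq> m" for k
  proof -
    have kr: "k \<noteq> r0" using k U0 jA by auto
    obtain x x' where x: "x \<noteq> x'" "x \<in> U k" "x \<in> U i" "x' \<in> U k" "x' \<in> U i" using twoU[of k i] k by blast
    obtain y y' where y: "y \<noteq> y'" "y \<in> V k" "y \<in> V m" "y' \<in> V k" "y' \<in> V m" using twoV[of k m] k by blast
    have "x \<noteq> y" "x \<noteq> y'" "x' \<noteq> y" "x' \<noteq> y'" using x y UV[OF kr] by blast+
    then have "card {x,x',y,y'} = 4" using x(1) y(1) by auto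
    moreover have "{x,x',y,y'} \<subseteq> {a1,a2,a3}" using x y A C by auto
    then have "card {x,x',y,y'} \<le> card {a1,a2,a3}" by (intro card_mono) auto
    moreover have "card {a1,a2,a3} = 3" using d by simp
    ultimately show False by simp
  qed
  have UmA: "U m \<inter> U i = {}" using UV[OF mr] A C by auto
  have ViC: "V i \<inter> V m = {}" using UV[OF ir] A C by auto
  have "k1 \<noteq> m" "k2 \<noteq> m" using k12 UmA by auto
  moreover have "k1 \<noteq> r0" "k2 \<noteq> r0" using k12 U0 jA by auto
  moreover have "k3 \<noteq> i" "k4 \<noteq> i" using k34 ViC by auto
  moreover have "k3 \<noteq> r0" "k4 \<noteq> r0" using k34 V0 jC by auto
  ultimately have "k1 \<noteq> k3" "k1 \<noteq> k4" "k2 \<noteq> k3" "k2 \<noteq> k4"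
    using nb k12 k34 by metis+
  then have "distinct [r0,i,m,k1,k2,k3,k4]"
    using k12 k34 im ir mr \<open>k1 \<noteq> m\<close> \<open>k2 \<noteq> m\<close> \<open>k1 \<noteq> r0\<close> \<open>k2 \<noteq> r0\<close>
      \<open>k3 \<noteq> i\<close> \<open>k4 \<noteq> i\<close> \<open>k3 \<noteq> r0\<close> \<open>k4 \<noteq> r0\<close> by auto
  then show False using no7 card6 by blast
qed

lemma (in combi) C32:
  assumes d: "distinct [j,p,q,a,c,e]" and A: "U i = {p,q,a}" and C: "V m = {p,q,c}"
    and im: "i \<noteq> m" and ir: "i \<noteq> r0" and mr: "m \<noteq> r0"
  shows False
proof -
  have UN: "(UNIV::'n set) = {j,p,q,a,c,e}" using univ6[OF card6 d] .
  have nA: "j \<notin> U i" "e \<notin> U i" "c \<notin> U i" using A d by auto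
  have nC: "j \<notin> V m" "e \<notin> V m" "a \<notin> V m" using C d by auto
  have Um1: "x \<in> U m \<Longrightarrow> x = a \<or> x = e" for x
  proof -
    assume xu: "x \<in> U m"
    have "x \<in> {j,p,q,a,c,e}" using UN by blast
    moreover have "x \<noteq> j" using Uj[OF mr] xu by auto
    moreover have "x \<notin> V m" using UV[OF mr] xu by auto
    ultimately show ?thesis using C by auto
  qed
  have "a \<notin> U m"
  proof
    assume "a \<in> U m"
    then obtain c' where c': "c' \<noteq> a" "c' \<in> U m" "c' \<in> U i" using G1U[of m i a] A im by auto
    then have "c' = e" using Um1 by blast
    then show False using c' nA by simp
  qed
  then have Um: "U m = {e}" using Um1 Une[of m] by blast
  have Vi1: "x \<in> V i \<Longrightarrow> x = c \<or> x = e" for x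
  proof -
    assume xv: "x \<in> V i"
    have "x \<in> {j,p,q,a,c,e}" using UN by blast
    moreover have "x \<noteq> j" using Vj[OF ir] xv by auto
    moreover have "x \<notin> U i" using UV[OF ir] xv by auto
    ultimately show ?thesis using A by auto
  qed
  have "c \<notin> V i"
  proof
    assume "c \<in> V i"
    then obtain c' where c': "c' \<noteq> c" "c' \<in> V i" "c' \<in> V m" using G1V[of i m c] C im by auto
    then have "c' = e" using Vi1 by blast
    then show False using c' nC by simp
  qed
  then have Vi: "V i = {e}" using Vi1 Vne[of i] by blast
  have eV: "e \<notin> V k" if ki: "k \<noteq> i" for k
  proof
    assume "e \<in> V k"
    then obtain c' where "c' \<noteq> e" "c' \<in> V k" "c' \<in> V i" using G1V[of k i e] Vi ki by auto
    then show False using Vi by auto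
  qed
  have eU: "e \<notin> U k" if km: "k \<noteq> m" for k
  proof
    assume "e \<in> U k"
    then obtain c' where "c' \<noteq> e" "c' \<in> U k" "c' \<in> U m" using G1U[of k m e] Um km by auto
    then show False using Um by auto
  qed
  have F: "U k = {x,x'} \<and> x \<noteq> x' \<and> {x,x'} \<subseteq> U i \<and> a \<in> {x,x'}"
    if k: "k \<noteq> r0" "k \<noteq> i" "k \<noteq> m" "x \<noteq> x'" "x \<in> U k" "x \<in> U i" "x' \<in> U k" "x' \<in> U i"
       "V k \<inter> V m \<noteq> {}" for k x x'
  proof -
    obtain y y' where y: "y \<noteq> y'" "y \<in> V k" "y \<in> V m" "y' \<in> V k" "y' \<in> V m" using twoV[of k m] k by blast
    have "x \<noteq> y" "x \<noteq> y'" "x' \<noteq> y" "x' \<noteq> y'" using k y UV[OF k(1)] by blast+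
    then have "card {x,x',y,y'} = 4" using k(4) y(1) by auto
    moreover have "{x,x',y,y'} \<subseteq> {p,q,a,c}" using k y A C by auto
    moreover have "card {p,q,a,c} = 4" using d by simp
    ultimately have eq: "{x,x',y,y'} = {p,q,a,c}" by (intro card_subset_eq) auto
    have sub: "U k \<subseteq> {x,x'}"
    proof
      fix z assume z: "z \<in> U k"
      have "z \<noteq> j" "z \<noteq> e" using z Uj[OF k(1)] eU[OF k(3)] by auto
      then have "z \<in> {p,q,a,c}" using UN by blast
      moreover have "z \<noteq> y" "z \<noteq> y'" using z y UV[OF k(1)] by blast+
      ultimately show "z \<in> {x,x'}" using eq by blast
    qed
    have "a \<noteq> y" "a \<noteq> y'" using y nC by blast+
    then have "a \<in> {x,x'}" using eq by blast
    then show ?thesis using sub k by auto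
  qed
  obtain k1 k2 where k12: "k1 \<noteq> k2" "k1 \<noteq> i" "k2 \<noteq> i" "U k1 \<inter> U i \<noteq> {}" "U k2 \<inter> U i \<noteq> {}"
    using G3U[of p q a i] A d by auto
  obtain k3 k4 where k34: "k3 \<noteq> k4" "k3 \<noteq> m" "k4 \<noteq> m" "V k3 \<inter> V m \<noteq> {}" "V k4 \<inter> V m \<noteq> {}"
    using G3V[of p q c m] C d by auto
  have UmA: "U m \<inter> U i = {}" using Um nA by auto
  have ViC: "V i \<inter> V m = {}" using Vi nC by auto
  have k1m: "k1 \<noteq> m" "k2 \<noteq> m" using k12 UmA by auto
  moreover have k1r: "k1 \<noteq> r0" "k2 \<noteq> r0" using k12 U0 nA by auto
  moreover have "k3 \<noteq> i" "k4 \<noteq> i" using k34 ViC by auto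
  moreover have "k3 \<noteq> r0" "k4 \<noteq> r0" using k34 V0 nC by auto
  ultimately have "\<exists>k k'. k \<in> {k1,k2} \<and> k' \<in> {k1,k2} \<and> k \<noteq> k' \<and> V k \<inter> V m \<noteq> {}"
  proof -
    assume h: "k1 \<noteq> m" "k2 \<noteq> m" "k1 \<noteq> r0" "k2 \<noteq> r0" "k3 \<noteq> i" "k4 \<noteq> i" "k3 \<noteq> r0" "k4 \<noteq> r0"
    show ?thesis
    proof (rule ccontr)
      assume "\<not> ?thesis"
      then have "k1 \<noteq> k3" "k1 \<noteq> k4" "k2 \<noteq> k3" "k2 \<noteq> k4" using k12 k34 by blast+
      then have "distinct [r0,i,m,k1,k2,k3,k4]" using h k12 k34 im ir mr by auto
      then show False using no7 card6 by blast
    qed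
  qed
  then obtain k k' where kk: "k \<in> {k1,k2}" "k' \<in> {k1,k2}" "k \<noteq> k'" "V k \<inter> V m \<noteq> {}" by blast
  have kprops: "k \<noteq> r0" "k \<noteq> i" "k \<noteq> m" "U k \<inter> U i \<noteq> {}" "k' \<noteq> r0" "k' \<noteq> i" "k' \<noteq> m" "U k' \<inter> U i \<noteq> {}"
    using kk k12 k1m k1r by auto
  obtain x x' where xx: "x \<noteq> x'" "x \<in> U k" "x \<in> U i" "x' \<in> U k" "x' \<in> U i" using twoU[of k i] kprops by blast
  have Fk: "U k = {x,x'}" "{x,x'} \<subseteq> U i" "a \<in> {x,x'}" using F[of k x x'] kprops xx kk by auto
  obtain z z' where zz: "z \<noteq> z'" "z \<in> U k'" "z \<in> U i" "z' \<in> U k'" "z' \<in> U i" using twoU[of k' i] kprops by blast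
  show False
  proof (cases "V k' \<inter> V m = {}")
    case False
    then have Fk': "U k' = {z,z'}" "{z,z'} \<subseteq> U i" using F[of k' z z'] kprops zz by auto
    have dpqa: "distinct [p,q,a]" using d by simp
    show False by (rule L_two[of i k k' p q a x x' z z']) (use kprops kk Fk Fk' xx zz A dpqa in auto)
  next
    case True
    have "V k' \<subseteq> {a}"
    proof
      fix w assume w: "w \<in> V k'"
      have "w \<noteq> j" "w \<noteq> e" "w \<notin> V m" using w Vj[OF kprops(5)] eV[OF kprops(6)] True by auto
      then show "w \<in> {a}" using UN C by auto
    qed
    then have "a \<in> V k'" using Vne[of k'] by blast
    then have aU: "a \<notin> U k'" using UV[OF kprops(5)] by blast
    have "z \<in> {p,q}" "z' \<in> {p,q}" using zz A aU by auto
    then have pq: "p \<in> U k'" "q \<in> U k'" using zz by auto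
    define w where "w = (if x = a then x' else x)"
    have w: "U k = {a,w}" "w \<in> {p,q}" using Fk xx A unfolding w_def by auto
    then have "w \<in> U k'" using pq by auto
    then obtain c' where "c' \<noteq> w" "c' \<in> U k" "c' \<in> U k'" using G1U[of k k' w] w kk by auto
    then show False using w aU by auto
  qed
qed

lemma (in combi) C31:
  assumes d: "distinct [j,p,a1,a2,c1,c2]" and A: "U i = {p,a1,a2}" and C: "V m = {p,c1,c2}"
    and im: "i \<noteq> m" and ir: "i \<noteq> r0" and mr: "m \<noteq> r0"
  shows False
proof -
  have UN: "(UNIV::'n set) = {j,p,a1,a2,c1,c2}" using univ6[OF card6 d] .
  have nA: "j \<notin> U i" "c1 \<notin> U i" "c2 \<notin> U i" using A d by auto
  have nC: "j \<notin> V m" "a1 \<notin> V m" "a2 \<notin> V m" using C d by auto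
  have Um1: "U m \<subseteq> {a1,a2}"
  proof
    fix x assume xu: "x \<in> U m"
    have "x \<in> {j,p,a1,a2,c1,c2}" using UN by blast
    moreover have "x \<noteq> j" using Uj[OF mr] xu by auto
    moreover have "x \<notin> V m" using UV[OF mr] xu by auto
    ultimately show "x \<in> {a1,a2}" using C by auto
  qed
  obtain x where x: "x \<in> U m" using Une[of m] by blast
  then obtain x' where "x' \<noteq> x" "x' \<in> U m" using G1U[of m i x] A im Um1 by auto
  then have Um: "a1 \<in> U m" "a2 \<in> U m" using x Um1 by auto
  have Vi1: "V i \<subseteq> {c1,c2}"
  proof
    fix y assume yv: "y \<in> V i"
    have "y \<in> {j,p,a1,a2,c1,c2}" using UN by blast
    moreover have "y \<noteq> j" using Vj[OF ir] yv by auto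
    moreover have "y \<notin> U i" using UV[OF ir] yv by auto
    ultimately show "y \<in> {c1,c2}" using A by auto
  qed
  obtain y where y: "y \<in> V i" using Vne[of i] by blast
  then obtain y' where "y' \<noteq> y" "y' \<in> V i" using G1V[of i m y] C im Vi1 by auto
  then have Vi: "c1 \<in> V i" "c2 \<in> V i" using y Vi1 by auto
  obtain k1 k2 where k12: "k1 \<noteq> k2" "k1 \<noteq> i" "k2 \<noteq> i" "U k1 \<inter> U i \<noteq> {}" "U k2 \<inter> U i \<noteq> {}"
    using G3U[of p a1 a2 i] A d by auto
  obtain k where k: "k \<noteq> m" "k \<noteq> i" "U k \<inter> U i \<noteq> {}" using k12 by metis
  have kr: "k \<noteq> r0" using k U0 nA by auto
  obtain z z' where zz: "z \<noteq> z'" "z \<in> U k" "z \<in> U i" "z' \<in> U k" "z' \<in> U i" using twoU[of k i] k by blast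
  show False
  proof (cases "p \<in> U k")
    case False
    then have "z \<in> {a1,a2}" "z' \<in> {a1,a2}" using zz A by auto
    then have ak: "a1 \<in> U k" "a2 \<in> U k" using zz by auto
    show False
    proof (rule G2U[of k m i a1 a2])
      show "a1 \<noteq> a2" using d by simp
      show "U k \<inter> U i \<subseteq> {a1,a2}" using False A by auto
    qed (use k im Um ak A Um1 in auto)
  next
    case True
    have "z \<in> {a1,a2} \<or> z' \<in> {a1,a2}" using zz A by auto
    then obtain w where w: "w \<in> U k" "w \<in> U m" using zz Um by blast
    then obtain w' where "w' \<noteq> w" "w' \<in> U k" "w' \<in> U m" using G1U[of k m w] k by auto
    then have ak: "a1 \<in> U k" "a2 \<in> U k" using w Um1 by auto
    have Vk: "V k \<subseteq> {c1,c2}"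
    proof
      fix v assume v: "v \<in> V k"
      have "v \<in> {j,p,a1,a2,c1,c2}" using UN by blast
      moreover have "v \<noteq> j" using Vj[OF kr] v by auto
      moreover have "v \<noteq> p" "v \<noteq> a1" "v \<noteq> a2" using UV[OF kr] v True ak by auto
      ultimately show "v \<in> {c1,c2}" by auto
    qed
    obtain v where v: "v \<in> V k" using Vne[of k] by blast
    then have "v \<in> V m" using Vk C by auto
    then obtain v' where "v' \<noteq> v" "v' \<in> V k" "v' \<in> V m" using G1V[of k m v] k v by auto
    then have ck: "c1 \<in> V k" "c2 \<in> V k" using v Vk by auto
    show False
    proof (rule G2V[of k i m c1 c2])
      show "c1 \<noteq> c2" using d by simp
    qed (use k im Vi ck C Vk Vi1 in auto)
  qed
qed

lemma (in combi) card_le6: "card (X::'n set) \<le> 6"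
  using card_mono[of UNIV X] card6 by auto

lemma (in combi) main:
  assumes Ai: "card (U i) = 3" and Cm: "3 \<le> card (V m)"
  shows False
proof -
  have ir: "i \<noteq> r0" using Ai U0 by auto
  have mr: "m \<noteq> r0" using Cm V0 by auto
  obtain a1 a2 a3 where A: "U i = {a1,a2,a3}" and da: "a1 \<noteq> a2" "a1 \<noteq> a3" "a2 \<noteq> a3"
    using Ai by (auto simp: card_3_iff)
  have jA: "j \<notin> U i" using Uj ir by auto
  have jC: "j \<notin> V m" using Vj mr by auto
  have im: "i \<noteq> m"
  proof
    assume "i = m"
    then have "U i \<inter> V i = {}" using UV ir by blast
    then have "card (U i \<union> V i) = card (U i) + card (V i)" by (simp add: card_Un_disjoint)
    moreover have "j \<notin> U i \<union> V i" using jA jC \<open>i = m\<close> by auto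
    then have "card (insert j (U i \<union> V i)) = card (U i \<union> V i) + 1" by simp
    moreover have "3 \<le> card (V i)" using Cm \<open>i = m\<close> by simp
    ultimately show False using card_le6[of "insert j (U i \<union> V i)"] Ai by linarith
  qed
  have UmC: "U m \<inter> V m = {}" using UV mr by blast
  have jUm: "j \<notin> U m" using Uj mr by auto
  show False
  proof (cases "4 \<le> card (V m)")
    case True
    have "card (insert j (V m \<union> U m)) = card (V m) + card (U m) + 1"
      using UmC jC jUm by (simp add: card_Un_disjoint Int_commute)
    then have "card (U m) \<le> 1" using True card_le6[of "insert j (V m \<union> U m)"] by linarith
    moreover obtain d where d: "d \<in> U m" using Une[of m] by blast
    ultimately have Um: "U m = {d}" by (auto simp: card_le_Suc0_iff_eq)
    have dA: "d \<notin> U i"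
    proof
      assume "d \<in> U i"
      then obtain c' where "c' \<noteq> d" "c' \<in> U m" using G1U[of m i d] Um im by auto
      then show False using Um by auto
    qed
    have dj: "d \<noteq> j" using jUm d by auto
    have "card {j,d,a1,a2,a3} \<le> 5" using card_length[of "[j,d,a1,a2,a3]"] by simp
    then have "{j,d,a1,a2,a3} \<noteq> (UNIV::'n set)" using card6 by auto
    then obtain b where b: "b \<notin> {j,d,a1,a2,a3}" by blast
    have dl: "distinct [j,d,a1,a2,a3,b]" using b da dA jA dj A by auto
    have UN: "(UNIV::'n set) = {j,d,a1,a2,a3,b}" using univ6[OF card6 dl] .
    have "V m \<subseteq> {a1,a2,a3,b}"
    proof
      fix x assume x: "x \<in> V m"
      then have "x \<noteq> j" "x \<noteq> d" using jC UmC d by auto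
      then show "x \<in> {a1,a2,a3,b}" using UN by blast
    qed
    moreover have "card {a1,a2,a3,b} = 4" using dl by auto
    ultimately have "V m = {a1,a2,a3,b}" using True
      by (intro card_seteq) auto
    then show False using C4[OF dl A Um _ im ir mr] by blast
  next
    case False
    then have C3: "card (V m) = 3" using Cm by simp
    have Ifin: "card (U i \<inter> V m) \<le> 3" using Ai card_mono[of "U i" "U i \<inter> V m"] by auto
    have AmC: "card (U i - V m) = 3 - card (U i \<inter> V m)" using Ai by (simp add: card_Diff_subset_Int)
    have CmA: "card (V m - U i) = 3 - card (U i \<inter> V m)" using C3 by (simp add: card_Diff_subset_Int Int_commute)
    have Asplit: "U i = (U i \<inter> V m) \<union> (U i - V m)" by auto
    have Csplit: "V m = (U i \<inter> V m) \<union> (V m - U i)" by auto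
    consider "card (U i \<inter> V m) = 0" | "card (U i \<inter> V m) = 1" | "card (U i \<inter> V m) = 2" | "card (U i \<inter> V m) = 3"
      using Ifin by linarith
    then show False
    proof cases
      case 1
      then have "U i \<inter> V m = {}" by simp
      then have "card (insert j (U i \<union> V m)) = 7" using Ai C3 jA jC by (simp add: card_Un_disjoint)
      then show False using card_le6[of "insert j (U i \<union> V m)"] by simp
    next
      case 2
      then obtain p where p: "U i \<inter> V m = {p}" using card_1_singletonE by blast
      have "card (U i - V m) = 2" "card (V m - U i) = 2" using AmC CmA 2 by simp_all
      then obtain x1 x2 y1 y2 where x: "U i - V m = {x1,x2}" "x1 \<noteq> x2" and y: "V m - U i = {y1,y2}" "y1 \<noteq> y2"
        by (auto simp: card_2_iff)
      have A': "U i = {p,x1,x2}" using Asplit p x by auto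
      have C': "V m = {p,y1,y2}" using Csplit p y by auto
      have dl: "distinct [j,p,x1,x2,y1,y2]" using x y p jA jC A' C' by auto
      show False using C31[OF dl A' C' im ir mr] .
    next
      case 3
      then obtain p q where pq: "U i \<inter> V m = {p,q}" "p \<noteq> q" by (auto simp: card_2_iff)
      have "card (U i - V m) = 1" "card (V m - U i) = 1" using AmC CmA 3 by simp_all
      then obtain a c where a: "U i - V m = {a}" and c: "V m - U i = {c}"
        by (auto simp: card_1_singleton_iff)
      have A': "U i = {p,q,a}" using Asplit pq a by auto
      have C': "V m = {p,q,c}" using Csplit pq c by auto
      have "card {j,p,q,a,c} \<le> 5" using card_length[of "[j,p,q,a,c]"] by simp
      then have "{j,p,q,a,c} \<noteq> (UNIV::'n set)" using card6 by auto
      then obtain e where e: "e \<notin> {j,p,q,a,c}" by blast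
      have dl: "distinct [j,p,q,a,c,e]" using pq a c e jA jC A' C' by auto
      show False using C32[OF dl A' C' im ir mr] .
    next
      case 4
      then have "U i \<inter> V m = U i" using Ai by (intro card_subset_eq) auto
      moreover have "U i \<inter> V m = V m" using 4 C3 by (intro card_subset_eq) auto
      ultimately have "V m = {a1,a2,a3}" using A by simp
      then show False using C33[of a1 a2 a3 i m] A da im ir mr by auto
    qed
  qed
qed



lemma sum_single_nz:
  fixes g :: "'a::finite \<Rightarrow> complex"
  assumes "\<And>a. a \<noteq> c \<Longrightarrow> g a = 0"
  shows "(\<Sum>a\<in>UNIV. g a) = g c"
proof -
  have "(\<Sum>a\<in>UNIV. g a) = g c + (\<Sum>a\<in>UNIV - {c}. g a)" by (simp add: sum.remove)
  also have "(\<Sum>a\<in>UNIV - {c}. g a) = 0" using assms by (intro sum.neutral) auto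
  finally show ?thesis by simp
qed

lemma sum_two_nz:
  fixes g :: "'a::finite \<Rightarrow> complex"
  assumes "a \<noteq> b" "\<And>c. c \<noteq> a \<Longrightarrow> c \<noteq> b \<Longrightarrow> g c = 0"
  shows "(\<Sum>c\<in>UNIV. g c) = g a + g b"
proof -
  have "(\<Sum>c\<in>UNIV. g c) = g a + (\<Sum>c\<in>UNIV - {a}. g c)" by (simp add: sum.remove)
  also have "(\<Sum>c\<in>UNIV - {a}. g c) = g b + (\<Sum>c\<in>UNIV - {a} - {b}. g c)"
    using assms(1) by (subst sum.remove[of _ b]) auto
  also have "(\<Sum>c\<in>UNIV - {a} - {b}. g c) = 0" using assms by (intro sum.neutral) auto
  finally show ?thesis by simp
qed

lemma T2_alg:
  fixes xa xb ya yb ua ub :: complex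
  assumes nz: "xa \<noteq> 0" "xb \<noteq> 0" "ub \<noteq> 0" "yb \<noteq> 0"
    and e1: "cnj xa * ya + cnj xb * yb = 0"
    and e2: "cnj xa * ua + cnj xb * ub = 0"
    and e3: "cnj ya * ua + cnj yb * ub = 0"
  shows False
proof -
  have eq: "ub * (cnj ya * cnj xb - cnj xa * cnj yb) = cnj ya * (cnj xa * ua + cnj xb * ub) - cnj xa * (cnj ya * ua + cnj yb * ub)"
    by (simp add: algebra_simps)
  have "ub * (cnj ya * cnj xb - cnj xa * cnj yb) = 0" unfolding eq e2 e3 by simp
  then have "cnj ya * cnj xb = cnj xa * cnj yb" using nz by simp
  then have "cnj (ya * xb) = cnj (xa * yb)" by simp
  then have yx: "ya * xb = xa * yb" using complex_cnj_cancel_iff by blast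
  have "xb * (cnj xa * ya + cnj xb * yb) = 0" using e1 by simp
  then have "cnj xa * (ya * xb) + cnj xb * xb * yb = 0" by (simp add: algebra_simps)
  moreover have "cnj xa * (ya * xb) = cnj xa * (xa * yb)" using yx by simp
  moreover have "yb * (cnj xa * xa + cnj xb * xb) = cnj xa * (xa * yb) + cnj xb * xb * yb" by (simp add: algebra_simps)
  ultimately have "yb * (cnj xa * xa + cnj xb * xb) = 0" by simp
  then have s0: "cnj xa * xa + cnj xb * xb = 0" using nz by simp
  have sq: "cnj z * z = complex_of_real ((cmod z)^2)" for z
    by (metis complex_norm_square mult.commute of_real_power)
  have "cnj xa * xa + cnj xb * xb = complex_of_real ((cmod xa)^2 + (cmod xb)^2)"
    unfolding sq by simp
  then have "(cmod xa)^2 + (cmod xb)^2 = 0" using s0 by (metis of_real_eq_0_iff)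
  moreover have "(cmod xa)^2 > 0" using nz by simp
  moreover have "(cmod xb)^2 \<ge> 0" by simp
  ultimately show False by linarith
qed

lemma N_alg:
  fixes aa ab ac xa xb :: complex
  assumes h1: "cnj aa * aa + cnj xa * xa = 1"
    and h2: "cnj ab * ab + cnj xb * xb = 1"
    and h3: "cnj ab * aa + cnj xb * xa = 0"
    and h4: "(cmod aa)^2 + (cmod ab)^2 + (cmod ac)^2 \<le> 1"
    and nz: "ac \<noteq> 0"
  shows False
proof -
  have sq: "cnj z * z = complex_of_real ((cmod z)^2)" for z
    by (metis complex_norm_square mult.commute of_real_power)
  have r1: "(cmod aa)^2 + (cmod xa)^2 = 1" using h1 unfolding sq by (metis of_real_1 of_real_add of_real_eq_iff)
  have r2: "(cmod ab)^2 + (cmod xb)^2 = 1" using h2 unfolding sq by (metis of_real_1 of_real_add of_real_eq_iff)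
  have "cnj xb * xa = - (cnj ab * aa)" using h3 by (simp add: eq_neg_iff_add_eq_0 add.commute)
  then have "cmod (cnj xb * xa) = cmod (cnj ab * aa)" by (metis norm_minus_cancel)
  then have "cmod xb * cmod xa = cmod ab * cmod aa" by (simp add: norm_mult)
  then have r3: "(cmod xb)^2 * (cmod xa)^2 = (cmod ab)^2 * (cmod aa)^2" by (metis power_mult_distrib)
  have "(1 - (cmod ab)^2) * (1 - (cmod aa)^2) = (cmod ab)^2 * (cmod aa)^2"
    using r1 r2 r3 by (metis add_diff_cancel_left')
  then have "(cmod aa)^2 + (cmod ab)^2 = 1" by (simp add: algebra_simps)
  then have "(cmod ac)^2 \<le> 0" using h4 by linarith
  then show False using nz by simp
qed


lemma norm_sq_sum:
  fixes v :: "complex^'n"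
  assumes "cinner v v = 1"
  shows "(\<Sum>k\<in>UNIV. (cmod (v $ k))^2) = 1"
proof -
  have eq: "cnj (v $ k) * v $ k = complex_of_real ((cmod (v $ k))^2)" for k
    by (metis complex_norm_square mult.commute of_real_power)
  have "(\<Sum>k\<in>UNIV. complex_of_real ((cmod (v $ k))^2)) = 1"
    using assms unfolding cinner_def eq .
  then show ?thesis by (metis of_real_eq_1_iff of_real_sum)
qed

lemma norm3:
  fixes v :: "complex^'n"
  assumes "cinner v v = 1" "a \<noteq> b" "a \<noteq> c" "b \<noteq> c"
  shows "(cmod (v $ a))^2 + (cmod (v $ b))^2 + (cmod (v $ c))^2 \<le> 1"
proof -
  have "(\<Sum>k\<in>{a,b,c}. (cmod (v $ k))^2) \<le> (\<Sum>k\<in>UNIV. (cmod (v $ k))^2)"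
    by (rule sum_mono2) auto
  then show ?thesis using assms norm_sq_sum[OF assms(1)] by simp
qed

context
  fixes f :: "'n::finite \<Rightarrow> complex^'n"
  assumes of: "\<And>k k'. cinner (f k) (f k') = (if k = k' then 1 else 0)"
begin

lemma fam_ne: "support (f k) \<noteq> {}"
proof
  assume "support (f k) = {}"
  then have "f k = 0" unfolding support_def by (auto simp: vec_eq_iff)
  then show False using of[of k k] unfolding cinner_def by simp
qed

lemma fam_G1:
  assumes "k \<noteq> k'" "c \<in> support (f k)" "c \<in> support (f k')"
  shows "\<exists>c'. c' \<noteq> c \<and> c' \<in> support (f k) \<and> c' \<in> support (f k')"
proof (rule ccontr)
  assume h: "\<not> ?thesis"
  have "cinner (f k) (f k') = cnj (f k $ c) * f k' $ c"
    unfolding cinner_def by (rule sum_single_nz) (use h in \<open>auto simp: support_def\<close>)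
  moreover have "cinner (f k) (f k') = 0" using of assms(1) by simp
  ultimately show False using assms(2,3) by (simp add: support_def)
qed

lemma fam_G2:
  assumes "k1 \<noteq> k2" "k1 \<noteq> k3" "k2 \<noteq> k3" "a \<noteq> b"
    "a \<in> support (f k1)" "b \<in> support (f k1)" "a \<in> support (f k2)" "b \<in> support (f k2)"
    "a \<in> support (f k3)" "b \<in> support (f k3)"
    "support (f k1) \<inter> support (f k2) \<subseteq> {a,b}" "support (f k1) \<inter> support (f k3) \<subseteq> {a,b}"
    "support (f k2) \<inter> support (f k3) \<subseteq> {a,b}"
  shows False
proof -
  have two: "cinner (f p) (f q) = cnj (f p $ a) * f q $ a + cnj (f p $ b) * f q $ b"
    if "support (f p) \<inter> support (f q) \<subseteq> {a,b}" for p q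
    unfolding cinner_def by (rule sum_two_nz) (use that assms(4) in \<open>auto simp: support_def\<close>)
  have e1: "cnj (f k1 $ a) * f k2 $ a + cnj (f k1 $ b) * f k2 $ b = 0"
    using two[OF assms(11)] of[of k1 k2] assms(1) by simp
  have e2: "cnj (f k1 $ a) * f k3 $ a + cnj (f k1 $ b) * f k3 $ b = 0"
    using two[OF assms(12)] of[of k1 k3] assms(2) by simp
  have e3: "cnj (f k2 $ a) * f k3 $ a + cnj (f k2 $ b) * f k3 $ b = 0"
    using two[OF assms(13)] of[of k2 k3] assms(3) by simp
  show False by (rule T2_alg[OF _ _ _ _ e1 e2 e3]) (use assms in \<open>auto simp: support_def\<close>)
qed

lemma fam_G3:
  assumes cf: "\<And>a b. (\<Sum>k\<in>UNIV. cnj (f k $ b) * f k $ a) = (if a = b then 1 else 0)"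
    and d: "a \<noteq> b" "a \<noteq> c" "b \<noteq> c"
    and m: "a \<in> support (f i)" "b \<in> support (f i)" "c \<in> support (f i)"
  shows "\<exists>k1 k2. k1 \<noteq> k2 \<and> k1 \<noteq> i \<and> k2 \<noteq> i \<and> support (f k1) \<inter> support (f i) \<noteq> {} \<and> support (f k2) \<inter> support (f i) \<noteq> {}"
proof (rule ccontr)
  assume h: "\<not> ?thesis"
  obtain x :: "complex^'n" where x: "\<And>a' b'. a' \<in> support (f i) \<Longrightarrow> b' \<in> support (f i) \<Longrightarrow>
     (\<Sum>k\<in>UNIV. cnj (f k $ b') * f k $ a') = cnj (f i $ b') * f i $ a' + cnj (x $ b') * x $ a'"
  proof (cases "\<exists>k0. k0 \<noteq> i \<and> support (f k0) \<inter> support (f i) \<noteq> {}")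
    case True
    then obtain k0 where k0: "k0 \<noteq> i" "support (f k0) \<inter> support (f i) \<noteq> {}" by blast
    have z: "f k $ a' = 0" if "k \<noteq> i" "k \<noteq> k0" "a' \<in> support (f i)" for k a'
      using h k0 that by (auto simp: support_def)
    show ?thesis
    proof (rule that[of "f k0"])
      fix a' b' assume ab: "a' \<in> support (f i)" "b' \<in> support (f i)"
      show "(\<Sum>k\<in>UNIV. cnj (f k $ b') * f k $ a') = cnj (f i $ b') * f i $ a' + cnj (f k0 $ b') * f k0 $ a'"
        by (rule sum_two_nz) (use k0 z ab in auto)
    qed
  next
    case False
    have z: "f k $ a' = 0" if "k \<noteq> i" "a' \<in> support (f i)" for k a'
      using False that by (auto simp: support_def)
    show ?thesis
    proof (rule that[of 0])
      fix a' b' assume ab: "a' \<in> support (f i)" "b' \<in> support (f i)"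
      show "(\<Sum>k\<in>UNIV. cnj (f k $ b') * f k $ a') = cnj (f i $ b') * f i $ a' + cnj ((0::complex^'n) $ b') * (0::complex^'n) $ a'"
        using sum_single_nz[of i "\<lambda>k. cnj (f k $ b') * f k $ a'"] z ab by auto
    qed
  qed
  have h1: "cnj (f i $ a) * f i $ a + cnj (x $ a) * x $ a = 1" using x[OF m(1) m(1)] cf[where a=a and b=a] by simp
  have h2: "cnj (f i $ b) * f i $ b + cnj (x $ b) * x $ b = 1" using x[OF m(2) m(2)] cf[where a=b and b=b] by simp
  have h3: "cnj (f i $ b) * f i $ a + cnj (x $ b) * x $ a = 0" using x[OF m(1) m(2)] cf[where a=a and b=b] d by simp
  have h4: "(cmod (f i $ a))^2 + (cmod (f i $ b))^2 + (cmod (f i $ c))^2 \<le> 1"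
    using norm3[OF _ d] of[of i i] by simp
  show False by (rule N_alg[OF h1 h2 h3 h4]) (use m in \<open>simp add: support_def\<close>)
qed

lemma fam_j:
  assumes "f r0 = ket j" "k \<noteq> r0"
  shows "j \<notin> support (f k)"
proof -
  have "cinner (f r0) (f k) = 0" using of assms(2) by simp
  then have "cinner (ket j) (f k) = 0" using assms(1) by simp
  moreover have "cinner (ket j) (f k) = f k $ j"
    unfolding cinner_def ket_def by (subst sum_single_nz[of j]) (auto simp: axis_def)
  ultimately show ?thesis by (simp add: support_def)
qed

end

lemma support_ket: "support (ket j) = {j}"
  unfolding support_def ket_def axis_def by auto

lemma column_combi:
  fixes f g :: "'n::finite \<Rightarrow> complex^'n"
  assumes card6: "CARD('n) = 6"
    and of: "\<And>k k'. cinner (f k) (f k') = (if k = k' then 1 else 0)"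
    and og: "\<And>k k'. cinner (g k) (g k') = (if k = k' then 1 else 0)"
    and cf: "\<And>a b. (\<Sum>k\<in>UNIV. cnj (f k $ b) * f k $ a) = (if a = b then 1 else 0)"
    and cg: "\<And>a b. (\<Sum>k\<in>UNIV. cnj (g k $ b) * g k $ a) = (if a = b then 1 else 0)"
    and f0: "f r0 = ket j" and g0: "g r0 = ket j"
    and dj: "\<And>k x. k \<noteq> r0 \<Longrightarrow> f k $ x * g k $ x = 0"
  shows "combi (\<lambda>k. support (f k)) (\<lambda>k. support (g k)) r0 j"
proof (unfold_locales)
  show "CARD('n) = 6" by (fact card6)
  show "support (f r0) = {j}" using f0 support_ket by simp
  show "support (g r0) = {j}" using g0 support_ket by simp
  show "j \<notin> support (f k)" if "k \<noteq> r0" for k using fam_j[OF of f0 that] .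
  show "j \<notin> support (g k)" if "k \<noteq> r0" for k using fam_j[OF og g0 that] .
  show "x \<notin> support (g k)" if "k \<noteq> r0" "x \<in> support (f k)" for k x
    using dj[OF that(1), of x] that(2) by (auto simp: support_def)
  show "support (f k) \<noteq> {}" for k using fam_ne[OF of] .
  show "support (g k) \<noteq> {}" for k using fam_ne[OF og] .
qed (fact fam_G1[OF of] fam_G1[OF og] fam_G2[OF of] fam_G2[OF og] fam_G3[OF of cf] fam_G3[OF og cg])+

lemma cinner_tensor: "cinner (tensor v w) (tensor v' w') = cinner v v' * cinner w w'"
proof -
  have "cinner (tensor v w) (tensor v' w') = (\<Sum>p\<in>UNIV \<times> UNIV. (cnj (v $ fst p) * v' $ fst p) * (cnj (w $ snd p) * w' $ snd p))"
    unfolding cinner_def tensor_def by (simp add: UNIV_Times_UNIV[symmetric] algebra_simps del: UNIV_Times_UNIV)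
  also have "\<dots> = (\<Sum>a\<in>UNIV. \<Sum>b\<in>UNIV. (cnj (v $ a) * v' $ a) * (cnj (w $ b) * w' $ b))"
    by (simp add: sum.cartesian_product split_beta)
  also have "\<dots> = cinner v v' * cinner w w'"
    unfolding cinner_def by (simp add: sum_product)
  finally show ?thesis .
qed

lemma cinner_ket: "cinner v (ket x) = cnj (v $ x)"
  unfolding cinner_def ket_def by (subst sum_single_nz[of x]) (auto simp: axis_def)

lemma setcompr_range1: "{F i | i. True} = range F" by auto

theorem mainTheorem7:
  fixes \<Psi> \<Phi> :: "6 \<Rightarrow> 6 \<Rightarrow> complex ^ 6" and i j :: 6
  assumes "is_QLS \<Psi>" and "is_QLS \<Phi>"
    and "orthogonal_QLS \<Psi> \<Phi>"
    and "standard_form 0 \<Psi> \<Phi>"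
    and "weight (\<Psi> i j) = 3"
  shows "\<forall>k. weight (\<Phi> k j) = 1 \<or> weight (\<Phi> k j) = 2"
proof
  fix k
  define f where "f = (\<lambda>r. \<Psi> r j)"
  define g where "g = (\<lambda>r. \<Phi> r j)"
  have onbf: "is_onb (range f)" using assms(1) unfolding is_QLS_def f_def
    using setcompr_range1[of "\<lambda>r. \<Psi> r j"] by metis
  have onbg: "is_onb (range g)" using assms(2) unfolding is_QLS_def g_def
    using setcompr_range1[of "\<lambda>r. \<Phi> r j"] by metis
  have injf: "inj f" by (rule onb_inj[OF onbf]) simp
  have injg: "inj g" by (rule onb_inj[OF onbg]) simp
  define T where "T = (\<lambda>p::6\<times>6. tensor (\<Psi> (fst p) (snd p)) (\<Phi> (fst p) (snd p)))"
  have "{tensor (\<Psi> i j) (\<Phi> i j) | i j. True} = range T"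
  proof (rule set_eqI)
    fix x
    show "x \<in> {tensor (\<Psi> i j) (\<Phi> i j) | i j. True} \<longleftrightarrow> x \<in> range T"
    proof
      assume "x \<in> {tensor (\<Psi> i j) (\<Phi> i j) | i j. True}"
      then obtain a b where "x = tensor (\<Psi> a b) (\<Phi> a b)" by blast
      then have "x = T (a,b)" unfolding T_def by simp
      then show "x \<in> range T" by blast
    next
      assume "x \<in> range T"
      then obtain p where "x = T p" by blast
      then show "x \<in> {tensor (\<Psi> i j) (\<Phi> i j) | i j. True}" unfolding T_def by blast
    qed
  qed
  then have onbT: "is_onb (range T)" using assms(3) unfolding orthogonal_QLS_def by simp
  have injT: "inj T" by (rule onb_inj[OF onbT]) simp
  have dj: "f r $ x * g r $ x = 0" if r: "r \<noteq> 0" for r x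
  proof -
    have "(r, j) \<noteq> (0, x)" using r by simp
    then have "cinner (T (r,j)) (T (0,x)) = 0" using onb_orth[OF onbT injT] by simp
    moreover have "\<Psi> 0 x = ket x" "\<Phi> 0 x = ket x" using assms(4) unfolding standard_form_def by auto
    ultimately have "cnj (f r $ x) * cnj (g r $ x) = 0"
      unfolding T_def f_def g_def by (simp add: cinner_tensor cinner_ket)
    then show ?thesis by (metis complex_cnj_mult complex_cnj_zero_iff)
  qed
  have f0: "f 0 = ket j" and g0: "g 0 = ket j" using assms(4) unfolding standard_form_def f_def g_def by auto
  interpret C: combi "\<lambda>r. support (f r)" "\<lambda>r. support (g r)" 0 j
    by (rule column_combi[OF _ onb_orth[OF onbf injf] onb_orth[OF onbg injg]
          onb_complete[OF onbf injf] onb_complete[OF onbg injg] f0 g0 dj]) simp_all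
  have Ai: "card (support (f i)) = 3" using assms(5) unfolding weight_def f_def by simp
  have "support (g k) \<noteq> {}" by (rule C.Vne)
  then have "card (support (g k)) \<noteq> 0" by simp
  moreover have "\<not> 3 \<le> card (support (g k))" using C.main[OF Ai] by blast
  ultimately have "card (support (g k)) = 1 \<or> card (support (g k)) = 2" by linarith
  then show "weight (\<Phi> k j) = 1 \<or> weight (\<Phi> k j) = 2"
    unfolding weight_def g_def by simp
qed

end
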